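(* Let $n\ge1$, $m\ge2$, $\alpha\in(0,1)$, $\bar g_a>0$, and let $W$ be a real $mn\times mn$ matrix satisfying (S), (A1), (A2), (A3) from the context, with largest eigenvalue $\mu_{\max}(W)$ and spectral norm $\|W\|$. If $\mu_{\max}(W)<2(1+\alpha)$ and $$\bar g_a>\frac{2\alpha^2(1+\alpha)\|W\|^2}{\sigma^2},\qquad \sigma=2(1+\alpha)-\mu_{\max}(W),$$ then the origin is a globally asymptotically stable equilibrium of the system $$\dot{\bar s}=W\bar f(\bar s)-\bar s-\bar a,\qquad \dot{\bar a}=\bar g_a\bar f(\bar s)-\alpha\bar a,\qquad (\bar s,\bar a)\in\mathbb{R}^{mn}\times\mathbb{R}^{mn}.$$
   Context: For $s\in\mathbb{R}^{mn}$ write $s=(s_{11},\dots,s_{1m},\dots,s_{n1},\dots,s_{nm})^T$. Define $f_{ij}(s)=e^{s_{ij}}/\sum_{l=1}^m e^{s_{il}}$ and $\bar f(s)=f(s)-\frac1m\mathbf 1_{mn}$, where $\mathbf 1_k$ is the all-ones vector in $\mathbb{R}^k$. The matrix $W$ is viewed as an $n\times n$ array of $m\times m$ blocks $W_{i,k}$, and: (S) $W_{i,i}=0$; (A1) $W$ is symmetric; (A2) $W_{i,k}\mathbf 1_m=\lambda_{ik}\mathbf 1_m$ for scalars $\lambda_{ik}$; (A3) $\lambda_{ik}=\lambda_{ki}$. $\|\cdot\|$ denotes the Euclidean norm and the induced matrix norm. *)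

theory Defs
  imports "HOL-Analysis.Analysis"
begin

text \<open>Vectors in R^{mn} are indexed by pairs (i,j) with i in the finite type 'n (n blocks)
  and j in the finite type 'm (m entries per block).  Entry W_{(i,j),(k,l)} of W is
  W $ (i,j) $ (k,l), so the block W_{i,k} is the m x m matrix (j,l) |-> W $ (i,j) $ (k,l).\<close>

definition softmax :: "real^('n::finite \<times> 'm::finite) \<Rightarrow> real^('n \<times> 'm)" where
  "softmax s = (\<chi> p. exp (s $ p) / (\<Sum>l\<in>UNIV. exp (s $ (fst p, l))))"

definition fbar :: "real^('n::finite \<times> 'm::finite) \<Rightarrow> real^('n \<times> 'm)" where
  "fbar s = softmax s - (\<chi> k. 1 / real CARD('m))"

definition mu_max :: "real^'k::finite^'k \<Rightarrow> real" where
  "mu_max A = Max {\<mu>. \<exists>v. v \<noteq> 0 \<and> A *v v = \<mu> *\<^sub>R v}"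

definition spec_norm :: "real^'k::finite^'k \<Rightarrow> real" where
  "spec_norm A = onorm (\<lambda>x. A *v x)"

definition is_solution :: "('a::real_normed_vector \<Rightarrow> 'a) \<Rightarrow> (real \<Rightarrow> 'a) \<Rightarrow> bool" where
  "is_solution F x \<longleftrightarrow> (\<forall>t\<ge>0. (x has_vector_derivative F (x t)) (at t within {0..}))"

definition globally_asymptotically_stable ::
  "('a::real_normed_vector \<Rightarrow> 'a) \<Rightarrow> 'a \<Rightarrow> bool" where
  "globally_asymptotically_stable F xe \<longleftrightarrow>
     F xe = 0 \<and>
     (\<forall>\<xi>. \<exists>x. is_solution F x \<and> x 0 = \<xi>) \<and>
     (\<forall>\<epsilon>>0. \<exists>\<delta>>0. \<forall>x. is_solution F x \<and> dist (x 0) xe < \<delta> \<longrightarrow>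
         (\<forall>t\<ge>0. dist (x t) xe < \<epsilon>)) \<and>
     (\<forall>x. is_solution F x \<longrightarrow> (x \<longlongrightarrow> xe) at_top)"

end

theory Submission
  imports Defs
begin


lemma integral_pow_Icc:
  assumes "0 \<le> t"
  shows "integral {0..t} (\<lambda>x::real. x ^ k) = t ^ Suc k / Suc k"
proof -
  have "((\<lambda>x::real. x ^ k) has_integral ((\<lambda>x. x ^ Suc k / Suc k) t - (\<lambda>x. x ^ Suc k / Suc k) 0)) {0..t}"
    apply (rule fundamental_theorem_of_calculus[OF assms])
    unfolding has_real_derivative_iff_has_vector_derivative[symmetric]
    apply (auto intro!: derivative_eq_intros simp del: of_nat_Suc)
    apply (cases k) apply (auto simp: field_simps)
    done
  then show ?thesis by (simp add: integral_unique)
qed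

lemma lipschitz_cont:
  fixes F :: "'a::real_normed_vector \<Rightarrow> 'b::real_normed_vector"
  assumes lip: "\<And>x y. norm (F x - F y) \<le> L * norm (x - y)" and L0: "0 \<le> L"
  shows "continuous_on S F"
proof -
  have "L-lipschitz_on S F"
    by (rule lipschitz_onI) (use lip L0 in \<open>auto simp: dist_norm\<close>)
  then show ?thesis by (rule lipschitz_on_continuous_on)
qed


lemma picard_global:
  fixes F :: "'a::euclidean_space \<Rightarrow> 'a"
  assumes lip: "\<And>x y. norm (F x - F y) \<le> L * norm (x - y)" and L0: "0 \<le> L"
  shows "\<exists>x. (\<forall>t\<ge>0. (x has_vector_derivative F (x t)) (at t within {0..})) \<and> x 0 = \<xi>"
proof -
  have contF: "continuous_on S F" for S using lipschitz_cont[OF lip L0] .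
  define p where "p = rec_nat (\<lambda>t::real. \<xi>) (\<lambda>k pk t. \<xi> + integral {0..t} (\<lambda>\<tau>. F (pk \<tau>)))"
  have p0: "p 0 = (\<lambda>t. \<xi>)" by (simp add: p_def)
  have pS: "p (Suc k) = (\<lambda>t. \<xi> + integral {0..t} (\<lambda>\<tau>. F (p k \<tau>)))" for k by (simp add: p_def)
  have pSt: "p (Suc k) t = \<xi> + integral {0..t} (\<lambda>\<tau>. F (p k \<tau>))" for k t by (simp add: pS)
  have cont: "continuous_on {0..T} (p k)" for k T
  proof (induction k)
    case 0 then show ?case by (simp add: p0)
  next
    case (Suc k)
    have "continuous_on {0..T} (\<lambda>\<tau>. F (p k \<tau>))"
      using continuous_on_compose2[OF contF Suc] by auto
    then have "(\<lambda>\<tau>. F (p k \<tau>)) integrable_on {0..T}" by (rule integrable_continuous_real)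
    then have "continuous_on {0..T} (\<lambda>t. integral {0..t} (\<lambda>\<tau>. F (p k \<tau>)))"
      by (rule indefinite_integral_continuous_1)
    then show ?case unfolding pS by (intro continuous_intros)
  qed
  have contFp: "continuous_on {0..T} (\<lambda>\<tau>. F (p k \<tau>))" for k T
    using continuous_on_compose2[OF contF cont] by auto
  have intFp: "(\<lambda>\<tau>. F (p k \<tau>)) integrable_on {0..T}" for k T
    by (rule integrable_continuous_real[OF contFp])
  define B where "B = norm (F \<xi>)"
  have bound: "norm (p (Suc k) t - p k t) \<le> B * L^k * t^Suc k / fact (Suc k)" if "0 \<le> t" for k t
    using that
  proof (induction k arbitrary: t)
    case 0
    then show ?case by (simp add: pS p0 B_def)
  next
    case (Suc k)
    have "p (Suc (Suc k)) t - p (Suc k) t = integral {0..t} (\<lambda>\<tau>. F (p (Suc k) \<tau>) - F (p k \<tau>))"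
      using integral_diff[OF intFp[of "Suc k" t] intFp[of k t]] pSt[of "Suc k" t] pSt[of k t]
      by simp
    also have "norm \<dots> \<le> integral {0..t} (\<lambda>\<tau>. L * (B * L^k * \<tau>^Suc k / fact (Suc k)))"
    proof (rule integral_norm_bound_integral)
      show "(\<lambda>\<tau>. F (p (Suc k) \<tau>) - F (p k \<tau>)) integrable_on {0..t}"
        by (intro integrable_diff intFp)
      show "(\<lambda>\<tau>. L * (B * L ^ k * \<tau> ^ Suc k / fact (Suc k))) integrable_on {0..t}"
        by (intro integrable_continuous_real continuous_intros) auto
      fix \<tau> assume "\<tau> \<in> {0..t}"
      then have "norm (F (p (Suc k) \<tau>) - F (p k \<tau>)) \<le> L * norm (p (Suc k) \<tau> - p k \<tau>)" using lip by blast
      also have "\<dots> \<le> L * (B * L ^ k * \<tau> ^ Suc k / fact (Suc k))"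
        using mult_left_mono[OF Suc.IH[of \<tau>] L0] \<open>\<tau> \<in> {0..t}\<close> by auto
      finally show "norm (F (p (Suc k) \<tau>) - F (p k \<tau>)) \<le> L * (B * L ^ k * \<tau> ^ Suc k / fact (Suc k))" .
    qed
    also have "\<dots> = integral {0..t} (\<lambda>\<tau>. (L * (B * L ^ k / fact (Suc k))) * \<tau> ^ Suc k)"
      by (rule arg_cong[where f="integral {0..t}"]) (simp add: fun_eq_iff field_simps)
    also have "\<dots> = L * (B * L ^ k / fact (Suc k)) * integral {0..t} (\<lambda>\<tau>. \<tau> ^ Suc k)"
      by (rule integral_mult_right)
    also have "\<dots> = B * L ^ Suc k * t ^ Suc (Suc k) / fact (Suc (Suc k))"
      using integral_pow_Icc[OF Suc.prems, of "Suc k"]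
      by (simp add: field_simps del: of_nat_Suc fact_Suc) (simp add: fact_Suc)
    finally show ?case .
  qed
  define x where "x t = \<xi> + (\<Sum>i. p (Suc i) t - p i t)" for t
  have ulim: "uniform_limit {0..T} p x sequentially" if "0 \<le> T" for T
  proof -
    define M where "M k = B * T * (inverse (fact k) * (L * T) ^ k)" for k
    have "norm (p (Suc k) t - p k t) \<le> M k" if "t \<in> {0..T}" for k t
    proof -
      have "norm (p (Suc k) t - p k t) \<le> B * L^k * t^Suc k / fact (Suc k)"
        using bound that by auto
      also have "\<dots> \<le> B * L^k * T^Suc k / fact k"
      proof -
        have B0: "0 \<le> B * L^k" using L0 by (simp add: B_def)
        have "t^Suc k \<le> T^Suc k" using that by (intro power_mono) auto
        moreover have "fact k \<le> (fact (Suc k) :: real)" by (rule fact_mono) simp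
        moreover have "(0::real) < fact k" by simp
        moreover have "0 \<le> t^Suc k" using that by simp
        ultimately have "t^Suc k / fact (Suc k) \<le> T^Suc k / fact k"
          by (meson divide_mono order_trans frac_le less_eq_real_def)
        from mult_left_mono[OF this B0] show ?thesis by (simp add: mult.assoc del: fact_Suc)
      qed
      also have "\<dots> = M k" by (simp add: M_def field_simps power_mult_distrib)
      finally show ?thesis .
    qed
    moreover have "summable M" unfolding M_def by (intro summable_mult summable_exp)
    ultimately have "uniform_limit {0..T} (\<lambda>n t. \<Sum>i<n. p (Suc i) t - p i t) (\<lambda>t. \<Sum>i. p (Suc i) t - p i t) sequentially"
      by (intro Weierstrass_m_test) auto
    then have "uniform_limit {0..T} (\<lambda>n t. \<xi> + (\<Sum>i<n. p (Suc i) t - p i t)) (\<lambda>t. \<xi> + (\<Sum>i. p (Suc i) t - p i t)) sequentially"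
      by (intro uniform_limit_add uniform_limit_const)
    moreover have "(\<lambda>n t. \<xi> + (\<Sum>i<n. p (Suc i) t - p i t)) = p"
    proof (intro ext)
      fix n t show "\<xi> + (\<Sum>i<n. p (Suc i) t - p i t) = p n t"
        using sum_lessThan_telescope[of "\<lambda>i. p i t" n] by (simp add: p0)
    qed
    ultimately show ?thesis unfolding x_def by simp
  qed
  have contx: "continuous_on {0..T} x" if "0 \<le> T" for T
    by (rule uniform_limit_theorem[OF _ ulim[OF that]]) (auto simp: cont)
  have pz: "p i 0 = \<xi>" for i by (cases i) (simp_all add: p0 pSt)
  have x0: "x 0 = \<xi>" by (simp add: x_def pz)
  have inteq: "x t = \<xi> + integral {0..t} (\<lambda>\<tau>. F (x \<tau>))" if t0: "0 \<le> t" for t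
  proof -
    have l1: "(\<lambda>n. p (Suc n) t) \<longlonglongrightarrow> x t"
      using tendsto_uniform_limitI[OF ulim[OF t0], of t] t0 LIMSEQ_Suc by auto
    have intFx: "(\<lambda>\<tau>. F (x \<tau>)) integrable_on {0..t}"
      using continuous_on_compose2[OF contF contx[OF t0]] by (intro integrable_continuous_real) auto
    have l2: "(\<lambda>n. \<xi> + integral {0..t} (\<lambda>\<tau>. F (p n \<tau>))) \<longlonglongrightarrow> \<xi> + integral {0..t} (\<lambda>\<tau>. F (x \<tau>))"
    proof (rule tendsto_add[OF tendsto_const], rule LIMSEQ_I)
      fix e :: real assume e: "0 < e"
      define e' where "e' = e / (L * t + 1)"
      have Lt: "0 \<le> L * t" using L0 t0 by simp
      have e'0: "0 < e'" using e Lt by (simp add: e'_def)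
      obtain N where N: "\<forall>n\<ge>N. \<forall>\<tau>\<in>{0..t}. dist (p n \<tau>) (x \<tau>) < e'"
        using uniform_limitD[OF ulim[OF t0] e'0] unfolding eventually_sequentially by blast
      show "\<exists>N. \<forall>n\<ge>N. norm (integral {0..t} (\<lambda>\<tau>. F (p n \<tau>)) - integral {0..t} (\<lambda>\<tau>. F (x \<tau>))) < e"
      proof (intro exI allI impI)
        fix n assume "N \<le> n"
        have "norm (integral {0..t} (\<lambda>\<tau>. F (p n \<tau>)) - integral {0..t} (\<lambda>\<tau>. F (x \<tau>))) = norm (integral {0..t} (\<lambda>\<tau>. F (p n \<tau>) - F (x \<tau>)))"
          using integral_diff[OF intFp intFx] by simp
        also have "\<dots> \<le> integral {0..t} (\<lambda>\<tau>. L * e')"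
        proof (rule integral_norm_bound_integral)
          show "(\<lambda>\<tau>. F (p n \<tau>) - F (x \<tau>)) integrable_on {0..t}" by (intro integrable_diff intFp intFx)
          show "(\<lambda>\<tau>. L * e') integrable_on {0..t}" by (rule integrable_const_ivl)
          fix \<tau> assume "\<tau> \<in> {0..t}"
          then have "dist (p n \<tau>) (x \<tau>) < e'" using N \<open>N \<le> n\<close> by auto
          then have "L * norm (p n \<tau> - x \<tau>) \<le> L * e'" using L0 by (simp add: dist_norm mult_left_mono)
          then show "norm (F (p n \<tau>) - F (x \<tau>)) \<le> L * e'"
            using lip[of "p n \<tau>" "x \<tau>"] by linarith
        qed
        also have "\<dots> = L * t * e'" using t0 by simp
        also have "\<dots> < e"
        proof -
          have "L * t * e' = e * (L * t / (L * t + 1))" using Lt by (simp add: e'_def field_simps)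
          also have "\<dots> < e * 1" using e Lt by (intro mult_strict_left_mono) auto
          finally show ?thesis by simp
        qed
        finally show "norm (integral {0..t} (\<lambda>\<tau>. F (p n \<tau>)) - integral {0..t} (\<lambda>\<tau>. F (x \<tau>))) < e" .
      qed
    qed
    have l2': "(\<lambda>n. p (Suc n) t) \<longlonglongrightarrow> \<xi> + integral {0..t} (\<lambda>\<tau>. F (x \<tau>))"
      using l2 by (simp add: pSt)
    show ?thesis using LIMSEQ_unique[OF l1 l2'] .
  qed
  have deriv: "(x has_vector_derivative F (x t)) (at t within {0..})" if "0 \<le> t" for t
  proof -
    have c: "continuous_on {0..t+1} (\<lambda>\<tau>. F (x \<tau>))"
      using continuous_on_compose2[OF contF contx[of "t+1"]] that by auto
    have d1: "((\<lambda>u. \<xi> + integral {0..u} (\<lambda>\<tau>. F (x \<tau>))) has_vector_derivative F (x t)) (at t within {0..t+1})"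
      using integral_has_vector_derivative[OF c, of t] that by (auto intro!: derivative_eq_intros)
    have d2: "(x has_vector_derivative F (x t)) (at t within {0..t+1})"
      by (rule has_vector_derivative_transform_within[OF d1, of 1]) (use that inteq in auto)
    have "at t within {0..t+1} = at t within {0..}"
      by (rule at_within_nhd[where S="{..<t+1}"]) auto
    then show ?thesis using d2 by simp
  qed
  show ?thesis using deriv x0 by blast
qed


lemma ln_ge_aux:
  fixes x :: real assumes "1 \<le> x"
  shows "2 * (x - 1) / (x + 1) \<le> ln x"
proof -
  let ?f = "\<lambda>x::real. ln x - 2 * (x - 1) / (x + 1)"
  have "?f 1 \<le> ?f x"
  proof (rule DERIV_nonneg_imp_nondecreasing[OF assms])
    fix y :: real assume y: "1 \<le> y" "y \<le> x"
    have "DERIV ?f y :> (1 / y - 4 / (y + 1)^2)"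
      using y by (auto intro!: derivative_eq_intros simp: field_simps power2_eq_square)
    moreover have "1 / y - 4 / (y + 1)^2 = (y - 1)^2 / (y * (y + 1)^2)"
      using y by (simp add: field_split_simps) algebra
    moreover have "0 \<le> (y - 1)^2 / (y * (y + 1)^2)" using y by simp
    ultimately show "\<exists>d. DERIV ?f y :> d \<and> 0 \<le> d" by auto
  qed
  then show ?thesis by simp
qed

lemma logmean_ineq:
  fixes a b :: real assumes a: "0 < a" and b: "0 < b"
  shows "2 * (a - b)^2 / (a + b) \<le> (a - b) * (ln a - ln b)"
proof -
  have main: "2 * (a - b)^2 / (a + b) \<le> (a - b) * (ln a - ln b)" if a: "0 < a" and b: "0 < b" and ab: "b \<le> a" for a b :: real
  proof -
    have "2 * (a/b - 1) / (a/b + 1) \<le> ln (a/b)" using ab b by (intro ln_ge_aux) simp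
    also have "ln (a/b) = ln a - ln b" using a b by (simp add: ln_div)
    also have "2 * (a/b - 1) / (a/b + 1) = 2 * (a - b) / (a + b)"
    proof -
      have "0 < a * b + b * b" using a b by (simp add: add_pos_pos)
      then show ?thesis using a b by (simp add: field_split_simps)
    qed
    finally have "2 * (a - b) / (a + b) \<le> ln a - ln b" .
    from mult_left_mono[OF this, of "a - b"] ab
    have le: "(a - b) * (2 * (a - b) / (a + b)) \<le> (a - b) * (ln a - ln b)" by linarith
    have eq: "(a - b) * (2 * (a - b) / (a + b)) = 2 * (a - b)^2 / (a + b)"
      by (simp add: power2_eq_square)
    show ?thesis by (rule ord_eq_le_trans[OF eq[symmetric] le])
  qed
  show ?thesis
  proof (cases "b \<le> a")
    case True then show ?thesis using main a b by blast
  next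
    case False
    then have le: "2 * (b - a)^2 / (b + a) \<le> (b - a) * (ln b - ln a)" using main[of b a] a b by simp
    have e1: "2 * (b - a)^2 / (b + a) = 2 * (a - b)^2 / (a + b)" by (simp add: power2_commute add.commute)
    have e2: "(b - a) * (ln b - ln a) = (a - b) * (ln a - ln b)" by (simp add: left_diff_distrib right_diff_distrib)
    show ?thesis using le unfolding e1 e2 .
  qed
qed

lemma zero_sum_l1:
  fixes d :: "'a \<Rightarrow> real"
  assumes fin: "finite I" and z: "sum d I = 0"
  shows "2 * (\<Sum>l\<in>I. (d l)^2) \<le> (\<Sum>l\<in>I. \<bar>d l\<bar>)^2"
proof -
  define S where "S = (\<Sum>l\<in>I. \<bar>d l\<bar>)"
  have bnd: "\<bar>d k\<bar> \<le> S / 2" if k: "k \<in> I" for k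
  proof -
    have "sum d I = d k + sum d (I - {k})" using fin k by (simp add: sum.remove)
    then have "\<bar>d k\<bar> = \<bar>sum d (I - {k})\<bar>" using z by simp
    also have "\<dots> \<le> (\<Sum>l\<in>I - {k}. \<bar>d l\<bar>)" by (rule sum_abs)
    finally have "\<bar>d k\<bar> \<le> (\<Sum>l\<in>I - {k}. \<bar>d l\<bar>)" .
    moreover have "S = \<bar>d k\<bar> + (\<Sum>l\<in>I - {k}. \<bar>d l\<bar>)" unfolding S_def using fin k by (simp add: sum.remove)
    ultimately show ?thesis by simp
  qed
  have "(\<Sum>l\<in>I. (d l)^2) = (\<Sum>l\<in>I. \<bar>d l\<bar> * \<bar>d l\<bar>)" by (simp add: power2_eq_square)
  also have "\<dots> \<le> (\<Sum>l\<in>I. \<bar>d l\<bar> * (S/2))"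
    by (intro sum_mono mult_left_mono bnd) auto
  also have "\<dots> = S * (S / 2)" by (simp only: sum_distrib_right[symmetric] S_def[symmetric])
  finally show ?thesis by (simp add: S_def power2_eq_square)
qed

lemma block_ineq:
  fixes p q :: "'a \<Rightarrow> real"
  assumes fin: "finite I" and pp: "\<And>l. l \<in> I \<Longrightarrow> 0 < p l" and qp: "\<And>l. l \<in> I \<Longrightarrow> 0 < q l"
    and ps: "sum p I = 1" and qs: "sum q I = 1"
  shows "2 * (\<Sum>l\<in>I. (p l - q l)^2) \<le> (\<Sum>l\<in>I. (p l - q l) * (ln (p l) - ln (q l)))"
proof -
  define d where "d l = p l - q l" for l
  define w where "w l = p l + q l" for l
  have w0: "0 < w l" if "l \<in> I" for l using pp[OF that] qp[OF that] by (simp add: w_def)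
  have h1: "2 * (\<Sum>l\<in>I. (d l)^2) \<le> (\<Sum>l\<in>I. \<bar>d l\<bar>)^2"
    by (rule zero_sum_l1[OF fin]) (simp add: d_def sum_subtractf ps qs)
  have sq: "\<bar>d l\<bar> / sqrt (w l) * sqrt (w l) = \<bar>d l\<bar>" if "l \<in> I" for l
    using w0[OF that] by simp
  have "(\<Sum>l\<in>I. \<bar>d l\<bar>)^2 = (\<Sum>l\<in>I. (\<bar>d l\<bar> / sqrt (w l)) * sqrt (w l))^2"
    using sq by simp
  also have "\<dots> \<le> (\<Sum>l\<in>I. (\<bar>d l\<bar> / sqrt (w l))^2) * (\<Sum>l\<in>I. (sqrt (w l))^2)"
    by (rule Cauchy_Schwarz_ineq_sum)
  also have "(\<Sum>l\<in>I. (sqrt (w l))^2) = 2"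
    using w0 by (simp add: w_def sum.distrib ps qs less_imp_le)
  also have "(\<Sum>l\<in>I. (\<bar>d l\<bar> / sqrt (w l))^2) = (\<Sum>l\<in>I. (d l)^2 / w l)"
    using w0 by (intro sum.cong) (auto simp: power_divide less_imp_le)
  finally have h2: "(\<Sum>l\<in>I. \<bar>d l\<bar>)^2 \<le> (\<Sum>l\<in>I. 2 * (d l)^2 / w l)"
    by (simp add: sum_distrib_left mult.commute)
  have h3: "(\<Sum>l\<in>I. 2 * (d l)^2 / w l) \<le> (\<Sum>l\<in>I. (p l - q l) * (ln (p l) - ln (q l)))"
    using pp qp by (intro sum_mono) (simp add: d_def w_def logmean_ineq)
  show ?thesis using h1 h2 h3 by (simp add: d_def)
qed


lemma sum_pair: "(\<Sum>p\<in>(UNIV::('a::finite \<times> 'b::finite) set). f p) = (\<Sum>i\<in>UNIV. \<Sum>l\<in>UNIV. f (i,l))"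
  by (simp add: sum.cartesian_product)

lemma inner_pair: "inner (x::real^('a::finite \<times> 'b::finite)) y = (\<Sum>i\<in>UNIV. \<Sum>l\<in>UNIV. x$(i,l) * y$(i,l))"
  by (simp add: inner_vec_def sum_pair)

lemma normsq_pair: "(norm (x::real^('a::finite \<times> 'b::finite)))^2 = (\<Sum>i\<in>UNIV. \<Sum>l\<in>UNIV. (x$(i,l))^2)"
  unfolding power2_norm_eq_inner inner_pair by (simp add: power2_eq_square)

definition Zs :: "real^('n::finite \<times> 'm::finite) \<Rightarrow> 'n \<Rightarrow> real" where
  "Zs s i = (\<Sum>l\<in>UNIV. exp (s $ (i,l)))"

lemma Zs_pos: "0 < Zs s i"
  unfolding Zs_def by (intro sum_pos) auto

lemma softmax_nth: "softmax s $ (i,l) = exp (s $ (i,l)) / Zs s i"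
  by (simp add: softmax_def Zs_def)

lemma softmax_pos: "0 < softmax s $ (i,l)"
  using Zs_pos[of s i] by (simp add: softmax_nth)

lemma softmax_sum: "(\<Sum>l\<in>UNIV. softmax s $ (i,l)) = 1"
  using Zs_pos[of s i] by (simp add: softmax_nth sum_divide_distrib[symmetric] Zs_def[symmetric])

lemma softmax_ln: "ln (softmax s $ (i,l)) = s $ (i,l) - ln (Zs s i)"
  using Zs_pos[of s i] by (simp add: softmax_nth ln_div)

lemma fbar_nth: "fbar s $ p = softmax s $ p - 1 / real CARD('m)"
  for s :: "real^('n::finite \<times> 'm::finite)"
  by (simp add: fbar_def)

lemma fbar_diff: "fbar x - fbar y = softmax x - softmax y"
  by (simp add: fbar_def)

lemma block_coco:
  fixes x y :: "real^('n::finite \<times> 'm::finite)"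
  shows "2 * (\<Sum>l\<in>UNIV. (softmax x $ (i,l) - softmax y $ (i,l))^2)
         \<le> (\<Sum>l\<in>UNIV. (softmax x $ (i,l) - softmax y $ (i,l)) * (x $ (i,l) - y $ (i,l)))"
proof -
  let ?p = "\<lambda>l. softmax x $ (i,l)" and ?q = "\<lambda>l. softmax y $ (i,l)"
  have "2 * (\<Sum>l\<in>UNIV. (?p l - ?q l)^2) \<le> (\<Sum>l\<in>UNIV. (?p l - ?q l) * (ln (?p l) - ln (?q l)))"
    by (rule block_ineq) (auto simp: softmax_pos softmax_sum)
  also have "\<dots> = (\<Sum>l\<in>UNIV. (?p l - ?q l) * (x $ (i,l) - y $ (i,l)) + (?p l - ?q l) * (ln (Zs y i) - ln (Zs x i)))"
    by (intro sum.cong refl) (simp add: softmax_ln algebra_simps)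
  also have "\<dots> = (\<Sum>l\<in>UNIV. (?p l - ?q l) * (x $ (i,l) - y $ (i,l))) + (\<Sum>l\<in>UNIV. ?p l - ?q l) * (ln (Zs y i) - ln (Zs x i))"
    by (simp add: sum.distrib sum_distrib_right)
  also have "(\<Sum>l\<in>UNIV. ?p l - ?q l) = 0"
    by (simp add: sum_subtractf softmax_sum)
  finally show ?thesis by simp
qed

lemma fbar_coco:
  fixes x y :: "real^('n::finite \<times> 'm::finite)"
  shows "2 * (norm (fbar x - fbar y))^2 \<le> inner (fbar x - fbar y) (x - y)"
proof -
  have "2 * (norm (fbar x - fbar y))^2 = (\<Sum>i\<in>UNIV. 2 * (\<Sum>l\<in>UNIV. (softmax x $ (i,l) - softmax y $ (i,l))^2))"
    by (simp add: fbar_diff normsq_pair sum_distrib_left)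
  also have "\<dots> \<le> (\<Sum>i\<in>UNIV. (\<Sum>l\<in>UNIV. (softmax x $ (i,l) - softmax y $ (i,l)) * (x $ (i,l) - y $ (i,l))))"
    by (intro sum_mono block_coco)
  also have "\<dots> = inner (fbar x - fbar y) (x - y)"
    by (simp add: fbar_diff inner_pair)
  finally show ?thesis .
qed

lemma fbar_zero: "fbar (0::real^('n::finite \<times> 'm::finite)) = 0"
  by (simp add: fbar_def softmax_def vec_eq_iff)

lemma fbar_lip:
  fixes x y :: "real^('n::finite \<times> 'm::finite)"
  shows "norm (fbar x - fbar y) \<le> 1/2 * norm (x - y)"
proof -
  let ?d = "norm (fbar x - fbar y)"
  have "2 * ?d^2 \<le> ?d * norm (x - y)"
    using fbar_coco[of x y] Cauchy_Schwarz_ineq2[of "fbar x - fbar y" "x - y"] by linarith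
  then show ?thesis
    by (cases "?d = 0") (auto simp: power2_eq_square)
qed

lemma fbar_coco0:
  fixes s :: "real^('n::finite \<times> 'm::finite)"
  shows "2 * (norm (fbar s))^2 \<le> inner (fbar s) s"
  using fbar_coco[of s 0] by (simp add: fbar_zero)


definition Phi :: "real^('n::finite \<times> 'm::finite) \<Rightarrow> real" where
  "Phi s = (\<Sum>i\<in>UNIV. ln (\<Sum>l\<in>UNIV. exp (s $ (i,l))) - ln (real CARD('m)) - (\<Sum>l\<in>UNIV. s $ (i,l)) / real CARD('m))"

lemma Phi_deriv:
  fixes s :: "real^('n::finite \<times> 'm::finite)"
  shows "(Phi has_derivative (\<lambda>h. inner (fbar s) h)) (at s)"
proof -
  have d1: "((\<lambda>x. x $ p) has_derivative (\<lambda>h. h $ p)) (at s)" for p :: "'n \<times> 'm"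
    apply (rule bounded_linear_imp_has_derivative)
    apply (rule bounded_linear_vec_nth)
    done
  have d2: "((\<lambda>x. exp (x $ p)) has_derivative (\<lambda>h. exp (s $ p) * h $ p)) (at s)" for p
    by (rule has_derivative_eq_rhs[OF has_derivative_exp[OF d1[of p]]]) (auto simp: fun_eq_iff)
  have d3: "((\<lambda>x. \<Sum>l\<in>UNIV. exp (x $ (i,l))) has_derivative (\<lambda>h. \<Sum>l\<in>UNIV. exp (s $ (i,l)) * h $ (i,l))) (at s)" for i
    by (rule has_derivative_sum) (rule d2)
  have d4: "((\<lambda>x. ln (\<Sum>l\<in>UNIV. exp (x $ (i,l)))) has_derivative (\<lambda>h. (\<Sum>l\<in>UNIV. exp (s $ (i,l)) * h $ (i,l)) / Zs s i)) (at s)" for i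
    by (rule has_derivative_eq_rhs, rule has_derivative_ln[OF _ d3]) (auto simp: Zs_def[symmetric] Zs_pos fun_eq_iff field_simps)
  have d5: "((\<lambda>x. (\<Sum>l\<in>UNIV. x $ (i,l)) / real CARD('m)) has_derivative (\<lambda>h. (\<Sum>l\<in>UNIV. h $ (i,l)) / real CARD('m))) (at s)" for i
    by (rule bounded_linear.has_derivative[OF bounded_linear_divide has_derivative_sum]) (rule d1)
  have "(Phi has_derivative (\<lambda>h. \<Sum>i\<in>UNIV. (\<Sum>l\<in>UNIV. exp (s $ (i,l)) * h $ (i,l)) / Zs s i - 0 - (\<Sum>l\<in>UNIV. h $ (i,l)) / real CARD('m))) (at s)"
    unfolding Phi_def
    by (intro has_derivative_sum has_derivative_diff d4 d5 has_derivative_const)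
  moreover have "(\<lambda>h. \<Sum>i\<in>UNIV. (\<Sum>l\<in>UNIV. exp (s $ (i,l)) * h $ (i,l)) / Zs s i - 0 - (\<Sum>l\<in>UNIV. h $ (i,l)) / real CARD('m))
     = (\<lambda>h. inner (fbar s) h)"
    by (auto simp: fun_eq_iff inner_pair fbar_nth softmax_nth sum_divide_distrib algebra_simps sum_subtractf)
  ultimately show ?thesis by simp
qed

lemma Phi_zero: "Phi (0::real^('n::finite \<times> 'm::finite)) = 0"
  by (simp add: Phi_def)

lemma Phi_nonneg: "0 \<le> Phi (s::real^('n::finite \<times> 'm::finite))"
  unfolding Phi_def
proof (rule sum_nonneg)
  fix i
  define c where "c = (\<Sum>l\<in>UNIV. s $ (i,l)) / real CARD('m)"
  have "(\<Sum>l\<in>UNIV. exp c * (1 + (s $ (i,l) - c))) \<le> (\<Sum>l\<in>UNIV. exp (s $ (i,l)))"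
  proof (rule sum_mono)
    fix l
    have "exp c * (1 + (s $ (i,l) - c)) \<le> exp c * exp (s $ (i,l) - c)"
      by (intro mult_left_mono exp_ge_add_one_self) auto
    then show "exp c * (1 + (s $ (i,l) - c)) \<le> exp (s $ (i,l))" by (simp add: exp_diff)
  qed
  moreover have "(\<Sum>l\<in>UNIV. exp c * (1 + (s $ (i,l) - c))) = real CARD('m) * exp c"
    by (simp add: sum_distrib_left[symmetric] sum_distrib_right[symmetric] sum.distrib sum_subtractf c_def algebra_simps)
  ultimately have le: "real CARD('m) * exp c \<le> (\<Sum>l\<in>UNIV. exp (s $ (i,l)))" by simp
  have "ln (real CARD('m)) + c = ln (real CARD('m) * exp c)" by (simp add: ln_mult)
  also have "\<dots> \<le> ln (\<Sum>l\<in>UNIV. exp (s $ (i,l)))"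
    using le by (subst ln_le_cancel_iff) (auto intro: sum_pos)
  finally show "0 \<le> ln (\<Sum>l\<in>UNIV. exp (s $ (i,l))) - ln (real CARD('m)) - (\<Sum>l\<in>UNIV. s $ (i,l)) / real CARD('m)"
    by (simp add: c_def)
qed


lemma symm_inner:
  fixes W :: "real^'k::finite^'k"
  assumes "transpose W = W"
  shows "inner (W *v x) y = inner x (W *v y)"
proof -
  have "W *v x = x v* W" using transpose_matrix_vector[of W x] assms by simp
  then show ?thesis by (simp add: dot_lmul_matrix)
qed

lemma mv_scale: "(W::real^'k::finite^'k) *v (c *\<^sub>R x) = c *\<^sub>R (W *v x)"
  by (simp add: matrix_vector_mult_def vec_eq_iff sum_distrib_left algebra_simps)

lemma mv_add: "(W::real^'k::finite^'k) *v (x + y) = W *v x + W *v y"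
  by (simp add: matrix_vector_right_distrib)

lemma rayleigh_max:
  fixes W :: "real^'k::finite^'k"
  assumes sym: "transpose W = W"
  shows "\<exists>M v. v \<noteq> 0 \<and> W *v v = M *\<^sub>R v \<and> (\<forall>x. inner x (W *v x) \<le> M * (norm x)^2)"
proof -
  let ?q = "\<lambda>x. inner x (W *v x)"
  have cq: "continuous_on (sphere 0 1) ?q"
    by (intro continuous_intros linear_continuous_on matrix_vector_mul_bounded_linear)
  obtain k :: 'k where True by blast
  have "axis k (1::real) \<in> sphere 0 1" by simp
  then have ne: "sphere (0::real^'k) 1 \<noteq> {}" by blast
  obtain v0 where v0: "v0 \<in> sphere 0 1" and mx: "\<forall>y\<in>sphere 0 1. ?q y \<le> ?q v0"
    using continuous_attains_sup[OF compact_sphere ne cq] by blast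
  define M where "M = ?q v0"
  have nv0: "norm v0 = 1" using v0 by simp
  have qscale: "?q (c *\<^sub>R x) = c^2 * ?q x" for c x
    by (simp add: mv_scale power2_eq_square)
  have qle: "?q x \<le> M * (norm x)^2" for x
  proof (cases "x = 0")
    case True then show ?thesis by simp
  next
    case False
    define u where "u = (1 / norm x) *\<^sub>R x"
    have "u \<in> sphere 0 1" using False by (simp add: u_def)
    then have "?q u \<le> M" using mx by (simp add: M_def)
    moreover have "x = norm x *\<^sub>R u" using False by (simp add: u_def)
    then have "?q x = (norm x)^2 * ?q u" using qscale by metis
    ultimately show ?thesis by (simp add: mult.commute mult_right_mono)
  qed
  define r where "r = W *v v0 - M *\<^sub>R v0"
  define D where "D = M * (norm r)^2 - ?q r"
  have D0: "0 \<le> D" using qle[of r] by (simp add: D_def)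
  have key: "2 * t * (norm r)^2 \<le> t^2 * D" for t
  proof -
    have "?q (v0 + t *\<^sub>R r) \<le> M * (norm (v0 + t *\<^sub>R r))^2" by (rule qle)
    moreover have "?q (v0 + t *\<^sub>R r) = M + 2 * t * inner r (W *v v0) + t^2 * ?q r"
      using symm_inner[OF sym, of r v0]
      by (simp add: mv_add mv_scale inner_add_left inner_add_right M_def algebra_simps power2_eq_square inner_commute)
    moreover have "(norm (v0 + t *\<^sub>R r))^2 = 1 + 2 * t * inner v0 r + t^2 * (norm r)^2"
    proof -
      have iv0: "inner v0 v0 = 1" using nv0 by (simp add: dot_square_norm)
      show ?thesis unfolding power2_norm_eq_inner
        using iv0 by (simp add: inner_add_left inner_add_right algebra_simps power2_eq_square inner_commute)
    qed
    moreover have "inner r (W *v v0) - M * inner v0 r = (norm r)^2"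
      by (simp add: r_def power2_norm_eq_inner inner_diff_left inner_diff_right algebra_simps inner_commute)
    ultimately show ?thesis unfolding D_def by (simp add: algebra_simps)
  qed
  have "r = 0"
  proof (rule ccontr)
    assume "r \<noteq> 0"
    then have rp: "0 < (norm r)^2" by simp
    define t where "t = (norm r)^2 / (D + 1)"
    have tp: "0 < t" using rp D0 by (simp add: t_def)
    have "2 * t * (norm r)^2 \<le> t^2 * D" by (rule key)
    then have "2 * (norm r)^2 \<le> t * D" using tp by (simp add: power2_eq_square)
    also have "t * D = (norm r)^2 * (D / (D + 1))" using D0 by (simp add: t_def field_simps)
    also have "\<dots> \<le> (norm r)^2 * 1" using D0 rp by (intro mult_left_mono) auto
    finally show False using rp by simp
  qed
  then have "W *v v0 = M *\<^sub>R v0" by (simp add: r_def)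
  moreover have "v0 \<noteq> 0" using nv0 by auto
  ultimately show ?thesis using qle by blast
qed

lemma eig_finite:
  fixes W :: "real^'k::finite^'k"
  assumes sym: "transpose W = W"
  shows "finite {\<mu>. \<exists>v. v \<noteq> 0 \<and> W *v v = \<mu> *\<^sub>R v}"
proof -
  let ?E = "{\<mu>. \<exists>v. v \<noteq> 0 \<and> W *v v = \<mu> *\<^sub>R v}"
  define ev where "ev \<mu> = (SOME v. v \<noteq> 0 \<and> W *v v = \<mu> *\<^sub>R v)" for \<mu>
  have ev: "ev \<mu> \<noteq> 0 \<and> W *v ev \<mu> = \<mu> *\<^sub>R ev \<mu>" if "\<mu> \<in> ?E" for \<mu>
  proof -
    have "\<exists>v. v \<noteq> 0 \<and> W *v v = \<mu> *\<^sub>R v" using that by simp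
    then show ?thesis unfolding ev_def by (rule someI_ex)
  qed
  have orth: "inner (ev a) (ev b) = 0" if "a \<in> ?E" "b \<in> ?E" "a \<noteq> b" for a b
  proof -
    have "a * inner (ev a) (ev b) = inner (W *v ev a) (ev b)" using ev[OF that(1)] by simp
    also have "\<dots> = inner (ev a) (W *v ev b)" by (rule symm_inner[OF sym])
    also have "\<dots> = b * inner (ev a) (ev b)" using ev[OF that(2)] by simp
    finally show ?thesis using that(3) by simp
  qed
  have inj: "inj_on ev ?E"
  proof (rule inj_onI)
    fix a b assume a: "a \<in> ?E" and b: "b \<in> ?E" and e: "ev a = ev b"
    have "a *\<^sub>R ev a = b *\<^sub>R ev a" using ev[OF a] ev[OF b] e by metis
    then show "a = b" using ev[OF a] by simp
  qed
  have "pairwise orthogonal (ev ` ?E)"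
    unfolding pairwise_def orthogonal_def using orth by blast
  then have "finite (ev ` ?E)" by (rule pairwise_orthogonal_imp_finite)
  then show ?thesis using finite_imageD inj by blast
qed

lemma mu_max_props:
  fixes W :: "real^'k::finite^'k"
  assumes sym: "transpose W = W" and diag: "\<And>p. W $ p $ p = 0"
  shows "0 \<le> mu_max W" and "inner x (W *v x) \<le> mu_max W * (norm x)^2"
proof -
  obtain M v where v: "v \<noteq> 0" "W *v v = M *\<^sub>R v" and qle: "\<forall>x. inner x (W *v x) \<le> M * (norm x)^2"
    using rayleigh_max[OF sym] by blast
  have "M \<le> mu_max W" unfolding mu_max_def
    using v by (intro Max_ge eig_finite[OF sym]) auto
  obtain k :: 'k where True by blast
  have "inner (axis k 1) (W *v axis k 1) = W $ k $ k"
    by (simp add: inner_axis' matrix_vector_mult_basis column_def)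
  then have "0 \<le> M" using qle[rule_format, of "axis k 1"] diag[of k] by simp
  show "0 \<le> mu_max W" using \<open>0 \<le> M\<close> \<open>M \<le> mu_max W\<close> by simp
  have "M * (norm x)^2 \<le> mu_max W * (norm x)^2" using \<open>M \<le> mu_max W\<close> by (simp add: mult_right_mono)
  then show "inner x (W *v x) \<le> mu_max W * (norm x)^2" using qle by (meson order_trans)
qed


lemma young:
  fixes a b c :: real assumes "0 < c"
  shows "a * b \<le> c * a^2 + b^2 / (4 * c)"
proof -
  have "0 \<le> (2 * c * a - b)^2" by simp
  then have "4 * c * (a * b) \<le> 4 * c * (c * a^2 + b^2 / (4 * c))"
    using assms by (simp add: power2_eq_square algebra_simps)
  then show ?thesis using assms by simp
qed

lemma dissip:
  fixes ga g \<epsilon> \<alpha> \<mu> w \<theta> U A S Xuwu Xus Xawu Xswu :: real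
  assumes ga: "0 < ga" and g: "0 < g" and e: "0 < \<epsilon>" and al: "0 < \<alpha>" and th: "0 < \<theta>" "\<theta> < 1"
    and gdef: "g = \<alpha> - \<epsilon>"
    and U: "0 \<le> U" and A: "0 \<le> A" and S: "0 \<le> S" and w: "0 \<le> w"
    and h1: "Xuwu \<le> \<mu> * U^2" and h2: "2 * U^2 \<le> Xus"
    and h3: "\<bar>Xawu\<bar> \<le> w * (A * U)" and h4: "\<bar>Xswu\<bar> \<le> w * (S * U)"
    and cond: "\<alpha> * (\<alpha> - \<epsilon>) * (1 + \<epsilon>) * w^2 \<le> 4 * \<theta> * \<epsilon> * (2 * (1 + g) - \<mu>) * ga"
  shows "ga * Xuwu - ga * (1 + g) * Xus - \<epsilon> * A^2 - g * Xawu + g * (1 + \<alpha>) * Xswu - g * (1 + \<alpha>) * S^2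
         \<le> - (1 - \<theta>) * \<epsilon> * A^2 - (1 - \<theta>) * (g * (1 + \<alpha>)) * S^2"
proof -
  define h where "h = g * (1 + \<alpha>)"
  have hp: "0 < h" using g al by (simp add: h_def)
  have s1: "ga * Xuwu \<le> ga * (\<mu> * U^2)" using h1 ga by (simp add: mult_left_mono)
  have s2: "ga * (1 + g) * (2 * U^2) \<le> ga * (1 + g) * Xus" using h2 ga g by (intro mult_left_mono) auto
  have s3: "- (g * Xawu) \<le> g * (w * (A * U))"
  proof -
    have "- Xawu \<le> w * (A * U)" using h3 by (simp add: abs_le_iff)
    from mult_left_mono[OF this] g show ?thesis by simp
  qed
  have s4: "h * Xswu \<le> h * (w * (S * U))"
  proof -
    have "Xswu \<le> w * (S * U)" using h4 by (simp add: abs_le_iff)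
    from mult_left_mono[OF this] hp show ?thesis by simp
  qed
  have y1: "(g * w * U) * A \<le> (\<theta> * \<epsilon>) * A^2 + (g * w * U)^2 / (4 * (\<theta> * \<epsilon>))"
    using young[of "\<theta> * \<epsilon>" A "g * w * U"] th e by (simp add: mult.commute)
  have y2: "(h * w * U) * S \<le> (\<theta> * h) * S^2 + (h * w * U)^2 / (4 * (\<theta> * h))"
    using young[of "\<theta> * h" S "h * w * U"] th hp by (simp add: mult.commute)
  have c2: "(g * w * U)^2 / (4 * (\<theta> * \<epsilon>)) + (h * w * U)^2 / (4 * (\<theta> * h)) \<le> ga * (2 * (1 + g) - \<mu>) * U^2"
  proof -
    have "(g * w * U)^2 / (4 * (\<theta> * \<epsilon>)) + (h * w * U)^2 / (4 * (\<theta> * h))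
        = (\<alpha> * (\<alpha> - \<epsilon>) * (1 + \<epsilon>) * w^2) * U^2 / (4 * \<theta> * \<epsilon>)"
    proof -
      have e1: "(g * w * U)^2 / (4 * (\<theta> * \<epsilon>)) = (g^2 * w^2 * U^2) / (4 * \<theta> * \<epsilon>)"
        by (simp add: power_mult_distrib mult.assoc)
      have e2: "(h * w * U)^2 / (4 * (\<theta> * h)) = (h * \<epsilon> * w^2 * U^2) / (4 * \<theta> * \<epsilon>)"
        using hp e th by (simp add: power2_eq_square)
      have e3: "g^2 + h * \<epsilon> = \<alpha> * (\<alpha> - \<epsilon>) * (1 + \<epsilon>)"
        by (simp add: h_def gdef power2_eq_square algebra_simps)
      have "(g^2 * w^2 * U^2) / (4 * \<theta> * \<epsilon>) + (h * \<epsilon> * w^2 * U^2) / (4 * \<theta> * \<epsilon>)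
          = ((g^2 + h * \<epsilon>) * w^2 * U^2) / (4 * \<theta> * \<epsilon>)"
        by (simp add: add_divide_distrib algebra_simps)
      then show ?thesis using e1 e2 e3 by simp
    qed
    also have "\<dots> \<le> (4 * \<theta> * \<epsilon> * (2 * (1 + g) - \<mu>) * ga) * U^2 / (4 * \<theta> * \<epsilon>)"
      using cond th e by (intro divide_right_mono mult_right_mono) auto
    also have "\<dots> = ga * (2 * (1 + g) - \<mu>) * U^2" using th e by simp
    finally show ?thesis .
  qed
  have "ga * Xuwu - ga * (1 + g) * Xus - \<epsilon> * A^2 - g * Xawu + h * Xswu - h * S^2
        \<le> ga * (\<mu> * U^2) - ga * (1 + g) * (2 * U^2) - \<epsilon> * A^2 + g * (w * (A * U)) + h * (w * (S * U)) - h * S^2"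
    using s1 s2 s3 s4 by linarith
  also have "g * (w * (A * U)) = (g * w * U) * A" by (simp add: algebra_simps)
  also have "h * (w * (S * U)) = (h * w * U) * S" by (simp add: algebra_simps)
  also have "ga * (\<mu> * U^2) - ga * (1 + g) * (2 * U^2) = - (ga * (2 * (1 + g) - \<mu>) * U^2)"
    by (simp add: algebra_simps)
  finally have "ga * Xuwu - ga * (1 + g) * Xus - \<epsilon> * A^2 - g * Xawu + h * Xswu - h * S^2
        \<le> - (ga * (2 * (1 + g) - \<mu>) * U^2) - \<epsilon> * A^2 + (g * w * U) * A + (h * w * U) * S - h * S^2" .
  then have "ga * Xuwu - ga * (1 + g) * Xus - \<epsilon> * A^2 - g * Xawu + h * Xswu - h * S^2
        \<le> - \<epsilon> * A^2 + (\<theta> * \<epsilon>) * A^2 + (\<theta> * h) * S^2 - h * S^2"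
    using y1 y2 c2 by linarith
  also have "\<dots> = - (1 - \<theta>) * \<epsilon> * A^2 - (1 - \<theta>) * h * S^2" by (simp add: algebra_simps)
  finally show ?thesis by (simp add: h_def)
qed


lemma theta_choice:
  fixes R D :: real
  assumes "0 \<le> R" "R < D" 
  shows "\<exists>\<theta>. 0 < \<theta> \<and> \<theta> < 1 \<and> R \<le> \<theta> * D"
proof -
  have D: "0 < D" using assms by simp
  define \<theta> where "\<theta> = (1 + R / D) / 2"
  have q1: "R / D < 1" using assms D by simp
  have q2: "0 \<le> R / D" using assms D by simp
  have q3: "\<theta> * D = (D + R) / 2" using D by (simp add: \<theta>_def field_simps)
  have gen: "0 < (1 + r) / 2 \<and> (1 + r) / 2 < 1" if "0 \<le> r" "r < 1" for r :: real
    using that by auto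
  have "0 < \<theta> \<and> \<theta> < 1" unfolding \<theta>_def using gen[OF q2 q1] .
  then have "0 < \<theta>" "\<theta> < 1" by auto
  moreover have "R \<le> \<theta> * D" unfolding q3 using assms by simp
  ultimately show ?thesis by blast
qed

lemma params:
  fixes \<alpha> ga \<mu> w :: real
  assumes al: "0 < \<alpha>" "\<alpha> < 1" and ga: "0 < ga" and mu0: "0 \<le> \<mu>" and mu1: "\<mu> < 2 * (1 + \<alpha>)"
    and w: "0 \<le> w"
    and gain: "ga > 2 * \<alpha>^2 * (1 + \<alpha>) * w^2 / (2 * (1 + \<alpha>) - \<mu>)^2"
  shows "\<exists>\<epsilon> \<theta>. 0 < \<epsilon> \<and> \<epsilon> < \<alpha> \<and> 0 < \<theta> \<and> \<theta> < 1 \<and> 0 < 2 * (1 + (\<alpha> - \<epsilon>)) - \<mu> \<and>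
      \<alpha> * (\<alpha> - \<epsilon>) * (1 + \<epsilon>) * w^2 \<le> 4 * \<theta> * \<epsilon> * (2 * (1 + (\<alpha> - \<epsilon>)) - \<mu>) * ga"
proof -
  define \<sigma> where "\<sigma> = 2 * (1 + \<alpha>) - \<mu>"
  have sp: "0 < \<sigma>" and sle: "\<sigma> \<le> 2 * (1 + \<alpha>)" using mu0 mu1 by (auto simp: \<sigma>_def)
  define X where "X = 2 * \<alpha>^2 * (1 + \<alpha>) * w^2"
  have X0: "0 \<le> X" using al by (simp add: X_def)
  have gX: "X < \<sigma>^2 * ga"
  proof -
    have "X / \<sigma>^2 < ga" using gain by (simp add: X_def \<sigma>_def)
    then show ?thesis using sp by (simp add: field_simps)
  qed
  have main: "\<exists>\<epsilon>. 0 < \<epsilon> \<and> \<epsilon> < \<alpha> \<and> 0 < \<sigma> - 2 * \<epsilon> \<and>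
      \<alpha> * (\<alpha> - \<epsilon>) * (1 + \<epsilon>) * w^2 < 4 * \<epsilon> * (\<sigma> - 2 * \<epsilon>) * ga"
  proof (cases "\<sigma> < 4 * \<alpha>")
    case True
    define \<epsilon> where "\<epsilon> = \<sigma> / 4"
    have e: "0 < \<epsilon>" "\<epsilon> < \<alpha>" using True sp by (auto simp: \<epsilon>_def)
    have lam: "\<sigma> - 2 * \<epsilon> = \<sigma> / 2" by (simp add: \<epsilon>_def)
    have f: "(\<alpha> - \<epsilon>) * (1 + \<epsilon>) \<le> \<alpha> * (1 + \<alpha>)"
    proof -
      have "(\<alpha> - \<epsilon>) * (1 + \<epsilon>) = \<alpha> + \<epsilon> * (\<alpha> - 1) - \<epsilon>^2" by (simp add: algebra_simps power2_eq_square)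
      also have "\<dots> \<le> \<alpha>" using e al by (smt (verit) mult_pos_neg zero_le_power2)
      also have "\<dots> \<le> \<alpha> * (1 + \<alpha>)" using al by (simp add: algebra_simps)
      finally show ?thesis .
    qed
    have "\<alpha> * (\<alpha> - \<epsilon>) * (1 + \<epsilon>) * w^2 = \<alpha> * w^2 * ((\<alpha> - \<epsilon>) * (1 + \<epsilon>))" by (simp add: algebra_simps)
    also have "\<dots> \<le> \<alpha> * w^2 * (\<alpha> * (1 + \<alpha>))" using f al by (intro mult_left_mono) auto
    also have "\<dots> = X / 2" by (simp add: X_def algebra_simps power2_eq_square)
    also have "\<dots> < \<sigma>^2 * ga / 2" using gX by simp
    also have "\<sigma>^2 * ga / 2 = 4 * \<epsilon> * (\<sigma> - 2 * \<epsilon>) * ga" by (simp add: lam \<epsilon>_def power2_eq_square)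
    finally show ?thesis using e lam sp by (intro exI[of _ \<epsilon>]) auto
  next
    case False
    define \<epsilon> where "\<epsilon> = \<alpha> / (1 + \<alpha>)"
    have e: "0 < \<epsilon>" "\<epsilon> < \<alpha>" using al by (auto simp: \<epsilon>_def field_simps)
    have lam: "\<sigma> / 2 \<le> \<sigma> - 2 * \<epsilon>" using False e by simp
    have num: "\<alpha> * (\<alpha> - \<epsilon>) * (1 + \<epsilon>) * w^2 = \<alpha>^3 * (1 + 2 * \<alpha>) * w^2 / (1 + \<alpha>)^2"
      using al by (simp add: \<epsilon>_def field_simps power2_eq_square power3_eq_cube)
    also have "\<dots> \<le> \<epsilon> * X / (1 + \<alpha>)"
    proof -
      have nz: "(1 + \<alpha>) \<noteq> 0" using al by simp
      have "\<epsilon> * X / (1 + \<alpha>) = \<alpha>^3 * 2 * w^2 / (1 + \<alpha>)"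
        using nz by (simp add: \<epsilon>_def X_def power2_eq_square power3_eq_cube)
      also have "\<alpha>^3 * 2 * w^2 / (1 + \<alpha>) = \<alpha>^3 * w^2 * (2 * (1 + \<alpha>)) / (1 + \<alpha>)^2"
      proof -
        have "\<alpha>^3 * w^2 * (2 * (1 + \<alpha>)) / (1 + \<alpha>)^2 = (\<alpha>^3 * w^2 * 2) * (1 + \<alpha>) / ((1 + \<alpha>) * (1 + \<alpha>))"
          by (simp only: power2_eq_square mult.assoc)
        also have "\<dots> = (\<alpha>^3 * w^2 * 2) / (1 + \<alpha>)" by (rule nonzero_mult_divide_mult_cancel_right[OF nz])
        finally show ?thesis by (simp add: mult_ac)
      qed
      also have "\<dots> \<ge> \<alpha>^3 * w^2 * (1 + 2 * \<alpha>) / (1 + \<alpha>)^2"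
        using al w by (intro divide_right_mono mult_left_mono) auto
      finally show ?thesis by (simp add: mult_ac)
    qed
    also have "\<dots> \<le> 2 * \<epsilon> * X / \<sigma>"
    proof -
      have "2 * \<epsilon> * X / (2 * (1 + \<alpha>)) = \<epsilon> * X / (1 + \<alpha>)"
        by (subst mult.assoc, rule mult_divide_mult_cancel_left) simp
      then have "\<epsilon> * X / (1 + \<alpha>) = 2 * \<epsilon> * X / (2 * (1 + \<alpha>))" by simp
      also have "\<dots> \<le> 2 * \<epsilon> * X / \<sigma>"
        using sle sp e X0 by (intro divide_left_mono) auto
      finally show ?thesis .
    qed
    also have "\<dots> < 2 * \<epsilon> * (\<sigma>^2 * ga) / \<sigma>"
      using gX e sp by (intro divide_strict_right_mono mult_strict_left_mono) auto
    also have "\<dots> = 4 * \<epsilon> * (\<sigma> / 2 * ga)" using sp by (simp add: power2_eq_square)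
    also have "\<dots> \<le> 4 * \<epsilon> * ((\<sigma> - 2 * \<epsilon>) * ga)"
      using lam e ga by (intro mult_right_mono mult_left_mono) auto
    also have "\<dots> = 4 * \<epsilon> * (\<sigma> - 2 * \<epsilon>) * ga" by simp
    finally show ?thesis using e lam sp by (intro exI[of _ \<epsilon>]) auto
  qed
  then obtain \<epsilon> where e: "0 < \<epsilon>" "\<epsilon> < \<alpha>" "0 < \<sigma> - 2 * \<epsilon>"
    and lt: "\<alpha> * (\<alpha> - \<epsilon>) * (1 + \<epsilon>) * w^2 < 4 * \<epsilon> * (\<sigma> - 2 * \<epsilon>) * ga" by blast
  have R0: "0 \<le> \<alpha> * (\<alpha> - \<epsilon>) * (1 + \<epsilon>) * w^2" using e al by simp
  obtain \<theta> where th: "0 < \<theta>" "\<theta> < 1" and le: "\<alpha> * (\<alpha> - \<epsilon>) * (1 + \<epsilon>) * w^2 \<le> \<theta> * (4 * \<epsilon> * (\<sigma> - 2 * \<epsilon>) * ga)"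
    using theta_choice[OF R0 lt] by blast
  have eq: "\<sigma> - 2 * \<epsilon> = 2 * (1 + (\<alpha> - \<epsilon>)) - \<mu>" by (simp add: \<sigma>_def)
  show ?thesis using e th le unfolding eq by (intro exI[of _ \<epsilon>] exI[of _ \<theta>]) (auto simp: mult_ac)
qed


lemma lyap_decrease:
  fixes \<phi> :: "real \<Rightarrow> real"
  assumes d: "\<And>t. a \<le> t \<Longrightarrow> t \<le> b \<Longrightarrow> \<exists>D. (\<phi> has_real_derivative D) (at t within {0..}) \<and> D \<le> -k"
    and a0: "0 \<le> a" and ab: "a \<le> b"
  shows "\<phi> b \<le> \<phi> a - k * (b - a)"
proof (cases "a = b")
  case True then show ?thesis by simp
next
  case False
  then have ab': "a < b" using ab by simp
  have "\<forall>t\<in>{a..b}. \<exists>D. (\<phi> has_real_derivative D) (at t within {0..}) \<and> D \<le> -k" using d by auto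
  then obtain D where D: "\<And>t. t \<in> {a..b} \<Longrightarrow> (\<phi> has_real_derivative D t) (at t within {0..}) \<and> D t \<le> -k"
    by metis
  define \<psi> where "\<psi> t = \<phi> t + k * t" for t
  have "(\<psi> has_derivative (\<lambda>h. h * (D t + k))) (at t within {a..b})" if "a \<le> t" "t \<le> b" for t
  proof -
    have "(\<phi> has_real_derivative D t) (at t within {a..b})"
      using D[of t] that a0 by (auto intro: has_field_derivative_subset)
    then have "(\<psi> has_real_derivative D t + k) (at t within {a..b})"
      unfolding \<psi>_def by (auto intro!: derivative_eq_intros)
    then show ?thesis unfolding has_field_derivative_def
      by (rule has_derivative_eq_rhs) (simp add: fun_eq_iff mult.commute)
  qed
  from mvt_simple[OF ab' this] obtain \<xi> where \<xi>: "\<xi> \<in> {a<..<b}" "\<psi> b - \<psi> a = (b - a) * (D \<xi> + k)"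
    by blast
  have "D \<xi> + k \<le> 0" using D[of \<xi>] \<xi>(1) by auto
  then have "(b - a) * (D \<xi> + k) \<le> 0" using ab by (simp add: mult_nonneg_nonpos)
  then show ?thesis using \<xi>(2) by (simp add: \<psi>_def algebra_simps)
qed

lemma lyapunov_gas:
  fixes F :: "'a::euclidean_space \<Rightarrow> 'a" and V :: "'a \<Rightarrow> real"
  assumes F0: "F 0 = 0"
    and ex: "\<And>\<xi>. \<exists>x. is_solution F x \<and> x 0 = \<xi>"
    and c: "0 < c" and Vlow: "\<And>z. c * (norm z)^2 \<le> V z"
    and Vcont: "continuous (at 0) V" and V0: "V 0 = 0"
    and eta: "0 < \<eta>"
    and Vdot: "\<And>x t. is_solution F x \<Longrightarrow> 0 \<le> t \<Longrightarrow>
       \<exists>D. ((\<lambda>t. V (x t)) has_real_derivative D) (at t within {0..}) \<and> D \<le> - \<eta> * (norm (x t))^2"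
  shows "globally_asymptotically_stable F 0"
proof -
  have Vnn: "0 \<le> V z" for z using Vlow[of z] c by (smt (verit) mult_nonneg_nonneg zero_le_power2)
  have mono: "V (x b) \<le> V (x a)" if x: "is_solution F x" and a0: "0 \<le> a" and ab: "a \<le> b" for x a b
  proof -
    have "V (x b) \<le> V (x a) - 0 * (b - a)"
    proof (rule lyap_decrease[where \<phi>="\<lambda>t. V (x t)"])
      fix t assume at: "a \<le> t" "t \<le> b"
      then obtain D where "((\<lambda>t. V (x t)) has_real_derivative D) (at t within {0..})" "D \<le> - \<eta> * (norm (x t))^2"
        using Vdot[OF x, of t] a0 by auto
      moreover have "- \<eta> * (norm (x t))^2 \<le> - 0" using eta by simp
      ultimately show "\<exists>D. ((\<lambda>t. V (x t)) has_real_derivative D) (at t within {0..}) \<and> D \<le> - 0" by auto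
    qed (use a0 ab in auto)
    then show ?thesis by simp
  qed
  have small: "\<exists>r>0. \<forall>z. norm z < r \<longrightarrow> V z < L" if "0 < L" for L
  proof -
    from Vcont that obtain r where r: "r > 0" "\<forall>z. dist z 0 < r \<longrightarrow> dist (V z) (V 0) < L"
      unfolding continuous_at_eps_delta by blast
    then show ?thesis using V0 by (intro exI[of _ r]) (auto simp: dist_norm)
  qed
  have stab: "\<forall>\<epsilon>>0. \<exists>\<delta>>0. \<forall>x. is_solution F x \<and> dist (x 0) 0 < \<delta> \<longrightarrow> (\<forall>t\<ge>0. dist (x t) 0 < \<epsilon>)"
  proof (intro allI impI)
    fix e :: real assume e: "0 < e"
    obtain r where r: "r > 0" "\<forall>z. norm z < r \<longrightarrow> V z < c * e^2"
      using small[of "c * e^2"] c e by auto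
    show "\<exists>\<delta>>0. \<forall>x. is_solution F x \<and> dist (x 0) 0 < \<delta> \<longrightarrow> (\<forall>t\<ge>0. dist (x t) 0 < e)"
    proof (intro exI[of _ r] conjI allI impI)
      fix x :: "real \<Rightarrow> 'a" and t :: real
      assume x: "is_solution F x \<and> dist (x 0) 0 < r" and t: "0 \<le> t"
      have "c * (norm (x t))^2 \<le> V (x t)" by (rule Vlow)
      also have "\<dots> \<le> V (x 0)" using mono[of x 0 t] x t by auto
      also have "\<dots> < c * e^2" using r x by auto
      finally have "(norm (x t))^2 < e^2" using c by simp
      then show "dist (x t) 0 < e" using e by (simp add: power_less_imp_less_base)
    qed (use r in auto)
  qed
  have conv: "(x \<longlongrightarrow> 0) at_top" if x: "is_solution F x" for x
  proof (rule tendstoI)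
    fix e :: real assume e: "0 < e"
    obtain r where r: "r > 0" "\<forall>z. norm z < r \<longrightarrow> V z < c * e^2"
      using small[of "c * e^2"] c e by auto
    define T0 where "T0 = V (x 0) / (\<eta> * r^2) + 1"
    have "0 \<le> V (x 0) / (\<eta> * r^2)" using Vnn[of "x 0"] eta r by simp
    then have T0: "0 < T0" by (simp add: T0_def)
    have "\<exists>t0\<in>{0..T0}. norm (x t0) < r"
    proof (rule ccontr)
      assume "\<not> ?thesis"
      then have big: "\<And>t. 0 \<le> t \<Longrightarrow> t \<le> T0 \<Longrightarrow> r \<le> norm (x t)" by force
      have "V (x T0) \<le> V (x 0) - (\<eta> * r^2) * (T0 - 0)"
      proof (rule lyap_decrease[where \<phi>="\<lambda>t. V (x t)"])
        fix t assume t: "0 \<le> t" "t \<le> T0"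
        then obtain D where D: "((\<lambda>t. V (x t)) has_real_derivative D) (at t within {0..})" "D \<le> - \<eta> * (norm (x t))^2"
          using Vdot[OF x, of t] by auto
        have "r^2 \<le> (norm (x t))^2" using big[OF t] r by (intro power_mono) auto
        then have "- \<eta> * (norm (x t))^2 \<le> - (\<eta> * r^2)" using eta by simp
        then show "\<exists>D. ((\<lambda>t. V (x t)) has_real_derivative D) (at t within {0..}) \<and> D \<le> - (\<eta> * r^2)"
          using D by auto
      qed (use T0 in auto)
      also have "\<dots> = V (x 0) - (\<eta> * r^2) * (V (x 0) / (\<eta> * r^2)) - \<eta> * r^2"
        by (simp add: T0_def algebra_simps)
      also have "\<dots> = - (\<eta> * r^2)" using eta r by simp
      also have "\<dots> < 0" using eta r by simp
      finally show False using Vnn[of "x T0"] by simp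
    qed
    then obtain t0 where t0: "0 \<le> t0" "t0 \<le> T0" "norm (x t0) < r" by auto
    show "\<forall>\<^sub>F t in at_top. dist (x t) 0 < e"
      unfolding eventually_at_top_linorder
    proof (intro exI[of _ T0] allI impI)
      fix t assume t: "T0 \<le> t"
      have "c * (norm (x t))^2 \<le> V (x t)" by (rule Vlow)
      also have "\<dots> \<le> V (x t0)" using mono[OF x, of t0 t] t0 t by auto
      also have "\<dots> < c * e^2" using r t0 by auto
      finally have "(norm (x t))^2 < e^2" using c by simp
      then show "dist (x t) 0 < e" using e by (simp add: power_less_imp_less_base)
    qed
  qed
  show ?thesis unfolding globally_asymptotically_stable_def
    using F0 ex stab conv by blast
qed


theorem proposition2:
  fixes W :: "real^('n::finite \<times> 'm::finite)^('n \<times> 'm)"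
    and \<alpha> ga :: real
  assumes m2: "CARD('m) \<ge> 2"
    and alpha: "0 < \<alpha>" "\<alpha> < 1"
    and ga_pos: "ga > 0"
    and S: "\<forall>i j l. W $ (i,j) $ (i,l) = 0"
    and A1: "transpose W = W"
    and A2_A3: "\<exists>lam::'n \<Rightarrow> 'n \<Rightarrow> real.
                  (\<forall>i k j. (\<Sum>l\<in>UNIV. W $ (i,j) $ (k,l)) = lam i k) \<and>
                  (\<forall>i k. lam i k = lam k i)"
    and mu: "mu_max W < 2 * (1 + \<alpha>)"
    and gain: "ga > 2 * \<alpha>\<^sup>2 * (1 + \<alpha>) * (spec_norm W)\<^sup>2 / (2 * (1 + \<alpha>) - mu_max W)\<^sup>2"
  shows "globally_asymptotically_stable
           (\<lambda>(s, a). (W *v fbar s - s - a, ga *\<^sub>R fbar s - \<alpha> *\<^sub>R a)) (0, 0)"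
proof -
  define F :: "(real^('n \<times> 'm)) \<times> (real^('n \<times> 'm)) \<Rightarrow> (real^('n \<times> 'm)) \<times> (real^('n \<times> 'm))"
    where "F = (\<lambda>(s, a). (W *v fbar s - s - a, ga *\<^sub>R fbar s - \<alpha> *\<^sub>R a))"
  define w where "w = spec_norm W"
  have normW: "norm (W *v v) \<le> w * norm v" for v
    unfolding w_def spec_norm_def by (rule onorm[OF matrix_vector_mul_bounded_linear])
  have w0: "0 \<le> w"
    unfolding w_def spec_norm_def by (rule onorm_pos_le[OF matrix_vector_mul_bounded_linear])
  have diag: "W $ p $ p = 0" for p using S by (cases p) auto
  have mu0: "0 \<le> mu_max W" and ray: "\<And>v. inner v (W *v v) \<le> mu_max W * (norm v)^2"
    using mu_max_props[OF A1 diag] by auto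
  obtain \<epsilon> \<theta> where e: "0 < \<epsilon>" "\<epsilon> < \<alpha>" and th: "0 < \<theta>" "\<theta> < 1"
    and lam: "0 < 2 * (1 + (\<alpha> - \<epsilon>)) - mu_max W"
    and cond: "\<alpha> * (\<alpha> - \<epsilon>) * (1 + \<epsilon>) * w^2 \<le> 4 * \<theta> * \<epsilon> * (2 * (1 + (\<alpha> - \<epsilon>)) - mu_max W) * ga"
    using params[OF alpha ga_pos mu0 mu w0] gain unfolding w_def by blast
  define g where "g = \<alpha> - \<epsilon>"
  have g0: "0 < g" using e by (simp add: g_def)
  define h where "h = g * (1 + \<alpha>)"
  have h0: "0 < h" using g0 alpha by (simp add: h_def)
  have fbl: "norm (fbar x - fbar y) \<le> 1/2 * norm (x - y)" for x y :: "real^('n \<times> 'm)"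
    by (rule fbar_lip)
  define L where "L = w / 2 + 2 + ga / 2 + \<alpha>"
  have L0: "0 \<le> L" using w0 ga_pos alpha by (simp add: L_def)
  have lip: "norm (F z1 - F z2) \<le> L * norm (z1 - z2)" for z1 z2
  proof -
    obtain s1 a1 where z1: "z1 = (s1, a1)" by (cases z1)
    obtain s2 a2 where z2: "z2 = (s2, a2)" by (cases z2)
    define ds where "ds = s1 - s2"
    define da where "da = a1 - a2"
    define du where "du = fbar s1 - fbar s2"
    define nd where "nd = norm (z1 - z2)"
    have ndp: "nd = norm (ds, da)" by (simp add: nd_def z1 z2 ds_def da_def)
    have dsn: "norm ds \<le> nd" unfolding ndp by (rule norm_fst_le)
    have dan: "norm da \<le> nd" unfolding ndp by (rule norm_snd_le)
    have dun: "norm du \<le> 1/2 * nd" using fbl[of s1 s2] dsn by (simp add: du_def ds_def)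
    have Fd: "F z1 - F z2 = (W *v du - ds - da, ga *\<^sub>R du - \<alpha> *\<^sub>R da)"
      by (simp add: F_def z1 z2 du_def ds_def da_def matrix_vector_mult_diff_distrib algebra_simps scaleR_diff_right)
    have n1: "norm (W *v du - ds - da) \<le> (w / 2 + 2) * nd"
    proof -
      have "norm (W *v du - ds - da) \<le> norm (W *v du) + norm ds + norm da"
        using norm_triangle_ineq4[of "W *v du - ds" da] norm_triangle_ineq4[of "W *v du" ds] by linarith
      also have "\<dots> \<le> w * norm du + nd + nd" using normW[of du] dsn dan by linarith
      also have "w * norm du \<le> w * (1/2 * nd)" using dun w0 by (rule mult_left_mono)
      finally show ?thesis by (simp add: algebra_simps)
    qed
    have n2: "norm (ga *\<^sub>R du - \<alpha> *\<^sub>R da) \<le> (ga / 2 + \<alpha>) * nd"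
    proof -
      have "norm (ga *\<^sub>R du - \<alpha> *\<^sub>R da) \<le> norm (ga *\<^sub>R du) + norm (\<alpha> *\<^sub>R da)"
        by (rule norm_triangle_ineq4)
      also have "\<dots> = ga * norm du + \<alpha> * norm da" using ga_pos alpha by simp
      also have "\<dots> \<le> ga * (1/2 * nd) + \<alpha> * nd"
        using dun dan ga_pos alpha by (intro add_mono mult_left_mono) auto
      finally show ?thesis by (simp add: algebra_simps)
    qed
    have "norm (F z1 - F z2) \<le> norm (W *v du - ds - da) + norm (ga *\<^sub>R du - \<alpha> *\<^sub>R da)"
      unfolding Fd by (rule norm_Pair_le)
    also have "\<dots> \<le> L * nd" using n1 n2 by (simp add: L_def algebra_simps)
    finally show ?thesis by (simp add: nd_def)
  qed
  have ex: "\<exists>x. is_solution F x \<and> x 0 = \<xi>" for \<xi>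
    using picard_global[OF lip L0, of \<xi>] unfolding is_solution_def by blast
  define V where "V z = ga * Phi (fst z) + 1/2 * inner (snd z) (snd z) - g * inner (snd z) (fst z) + h/2 * inner (fst z) (fst z)"
    for z :: "(real^('n \<times> 'm)) \<times> (real^('n \<times> 'm))"
  define DV where "DV z d = ga * inner (fbar (fst z)) (fst d) + inner (snd z) (snd d)
      - g * (inner (snd d) (fst z) + inner (snd z) (fst d)) + h * inner (fst z) (fst d)"
    for z d :: "(real^('n \<times> 'm)) \<times> (real^('n \<times> 'm))"
  have Vd: "(V has_derivative DV z) (at z)" for z
  proof -
    have dfst: "(fst has_derivative fst) (at z)"
      by (rule bounded_linear_imp_has_derivative) (rule bounded_linear_fst)
    have dP: "((\<lambda>z. Phi (fst z)) has_derivative (\<lambda>d. inner (fbar (fst z)) (fst d))) (at z)"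
      using diff_chain_at[OF dfst Phi_deriv[of "fst z"]] by (simp add: o_def)
    have "((\<lambda>z. ga * Phi (fst z) + 1/2 * inner (snd z) (snd z) - g * inner (snd z) (fst z) + h/2 * inner (fst z) (fst z)) has_derivative
     (\<lambda>d. ga * inner (fbar (fst z)) (fst d) + inner (snd z) (snd d)
      - g * (inner (snd d) (fst z) + inner (snd z) (fst d)) + h * inner (fst z) (fst d))) (at z)"
      by (auto intro!: derivative_eq_intros dP simp: fun_eq_iff algebra_simps inner_commute)
    then show ?thesis unfolding V_def[abs_def] DV_def[abs_def] by simp
  qed
  define \<eta> where "\<eta> = (1 - \<theta>) * min \<epsilon> h"
  have eta: "0 < \<eta>" using th e h0 by (simp add: \<eta>_def)
  have cond': "\<alpha> * (\<alpha> - \<epsilon>) * (1 + \<epsilon>) * w^2 \<le> 4 * \<theta> * \<epsilon> * (2 * (1 + g) - mu_max W) * ga"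
    using cond by (simp add: g_def)
  have Vdot: "\<exists>D. ((\<lambda>t. V (x t)) has_real_derivative D) (at t within {0..}) \<and> D \<le> - \<eta> * (norm (x t))^2"
    if x: "is_solution F x" and t: "0 \<le> t" for x t
  proof -
    have xd: "(x has_vector_derivative F (x t)) (at t within {0..})" using x t by (simp add: is_solution_def)
    have "((V \<circ> x) has_derivative (DV (x t) \<circ> (\<lambda>h. h *\<^sub>R F (x t)))) (at t within {0..})"
      by (rule diff_chain_within[OF xd[unfolded has_vector_derivative_def] has_derivative_at_withinI[OF Vd]])
    moreover have "DV (x t) \<circ> (\<lambda>h. h *\<^sub>R F (x t)) = (\<lambda>h. DV (x t) (F (x t)) * h)"
      by (simp add: fun_eq_iff DV_def algebra_simps)
    ultimately have der: "((\<lambda>t. V (x t)) has_real_derivative DV (x t) (F (x t))) (at t within {0..})"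
      by (simp add: has_field_derivative_def o_def)
    obtain s a where xt: "x t = (s, a)" by (cases "x t")
    define u where "u = fbar s"
    have Fx: "F (s, a) = (W *v u - s - a, ga *\<^sub>R u - \<alpha> *\<^sub>R a)" by (simp add: F_def u_def)
    have eq: "DV (x t) (F (x t)) = ga * inner u (W *v u) - ga * (1 + g) * inner u s - \<epsilon> * (norm a)^2
        - g * inner a (W *v u) + g * (1 + \<alpha>) * inner s (W *v u) - g * (1 + \<alpha>) * (norm s)^2"
      by (simp add: xt Fx DV_def h_def g_def u_def inner_diff_left inner_diff_right power2_norm_eq_inner algebra_simps inner_commute)
    have h2: "2 * (norm u)^2 \<le> inner u s" unfolding u_def by (rule fbar_coco0)
    have h3: "\<bar>inner a (W *v u)\<bar> \<le> w * (norm a * norm u)"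
    proof -
      have "\<bar>inner a (W *v u)\<bar> \<le> norm a * norm (W *v u)" by (rule Cauchy_Schwarz_ineq2)
      also have "\<dots> \<le> norm a * (w * norm u)" using normW by (simp add: mult_left_mono)
      finally show ?thesis by (simp add: mult_ac)
    qed
    have h4: "\<bar>inner s (W *v u)\<bar> \<le> w * (norm s * norm u)"
    proof -
      have "\<bar>inner s (W *v u)\<bar> \<le> norm s * norm (W *v u)" by (rule Cauchy_Schwarz_ineq2)
      also have "\<dots> \<le> norm s * (w * norm u)" using normW by (simp add: mult_left_mono)
      finally show ?thesis by (simp add: mult_ac)
    qed
    have dis: "DV (x t) (F (x t)) \<le> - (1 - \<theta>) * \<epsilon> * (norm a)^2 - (1 - \<theta>) * (g * (1 + \<alpha>)) * (norm s)^2"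
      unfolding eq
      by (rule dissip[OF ga_pos g0 e(1) alpha(1) th g_def _ _ _ w0 ray h2 h3 h4 cond']) auto
    have "\<eta> \<le> (1 - \<theta>) * \<epsilon>" unfolding \<eta>_def using th by (intro mult_left_mono) auto
    then have "\<eta> * (norm a)^2 \<le> (1 - \<theta>) * \<epsilon> * (norm a)^2" by (rule mult_right_mono) simp
    then have "- (1 - \<theta>) * \<epsilon> * (norm a)^2 \<le> - \<eta> * (norm a)^2" by (simp add: algebra_simps)
    moreover have "\<eta> \<le> (1 - \<theta>) * h" unfolding \<eta>_def using th by (intro mult_left_mono) auto
    then have "\<eta> * (norm s)^2 \<le> (1 - \<theta>) * h * (norm s)^2" by (rule mult_right_mono) simp
    then have "- (1 - \<theta>) * (g * (1 + \<alpha>)) * (norm s)^2 \<le> - \<eta> * (norm s)^2" by (simp add: h_def algebra_simps)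
    moreover have "(norm (x t))^2 = (norm s)^2 + (norm a)^2" by (simp add: xt norm_Pair)
    ultimately have "DV (x t) (F (x t)) \<le> - \<eta> * (norm (x t))^2" using dis by (simp add: algebra_simps)
    then show ?thesis using der by blast
  qed
  define c where "c = min (1/4) (h/2 - g^2)"
  have c0: "0 < c"
  proof -
    have "g < (1 + \<alpha>) / 2" using g0 alpha e by (simp add: g_def)
    then have "0 < g * ((1 + \<alpha>) / 2 - g)" using g0 by simp
    then have "0 < h/2 - g^2" by (simp add: h_def algebra_simps power2_eq_square)
    then show ?thesis by (simp add: c_def)
  qed
  have Vlow: "c * (norm z)^2 \<le> V z" for z
  proof -
    obtain s a where z: "z = (s, a)" by (cases z)
    have P: "0 \<le> ga * Phi s" using ga_pos Phi_nonneg[of s] by simp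
    have "g * inner a s \<le> g * (norm a * norm s)"
      using Cauchy_Schwarz_ineq2[of a s] g0 by (intro mult_left_mono) auto
    also have "\<dots> = norm a * (g * norm s)" by simp
    also have "\<dots> \<le> 1/4 * (norm a)^2 + (g * norm s)^2 / (4 * (1/4))" by (rule young) simp
    finally have y: "g * inner a s \<le> 1/4 * (norm a)^2 + g^2 * (norm s)^2" by (simp add: power_mult_distrib)
    have "V z = ga * Phi s + 1/2 * (norm a)^2 - g * inner a s + h/2 * (norm s)^2"
      by (simp add: V_def z power2_norm_eq_inner)
    also have "\<dots> \<ge> 1/4 * (norm a)^2 + (h/2 - g^2) * (norm s)^2" using P y by (simp add: algebra_simps)
    finally have "1/4 * (norm a)^2 + (h/2 - g^2) * (norm s)^2 \<le> V z" .
    moreover have "c * (norm a)^2 \<le> 1/4 * (norm a)^2"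
    proof (rule mult_right_mono)
      show "c \<le> 1/4" unfolding c_def by (rule min.cobounded1)
    qed simp
    moreover have "c * (norm s)^2 \<le> (h/2 - g^2) * (norm s)^2"
    proof (rule mult_right_mono)
      show "c \<le> h/2 - g^2" unfolding c_def by (rule min.cobounded2)
    qed simp
    moreover have "(norm z)^2 = (norm s)^2 + (norm a)^2" by (simp add: z norm_Pair)
    ultimately show ?thesis by (simp add: algebra_simps)
  qed
  have Vcont: "continuous (at 0) V" by (rule has_derivative_continuous[OF Vd])
  have V0: "V 0 = 0" by (simp add: V_def Phi_zero)
  have F0: "F 0 = 0" by (simp add: F_def fbar_zero zero_prod_def)
  have "globally_asymptotically_stable F 0"
    by (rule lyapunov_gas[OF F0 ex c0 Vlow Vcont V0 eta Vdot])
  then show ?thesis by (simp add: F_def zero_prod_def)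
qed


end
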